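(* Let $f_1,\dots,f_m:\mathbb R^n\to\mathbb R$ be continuously differentiable with $\nabla f_j$ being $L_j$-Lipschitz, and set $L=\max_j L_j$. Let $C_1>0$, $\tau>0$ and $x,y\in\mathbb R^n$ with $\|x\|+\|y\|\le C_1$. Then $$\Big\|\mathrm{proj}_{C(y)}\Big(\frac{y-x}{\tau}\Big)-\mathrm{proj}_{C(x)}\Big(\frac{y-x}{\tau}\Big)\Big\|\le\sqrt{C_2L}\,\|x-y\|^{1/2}+\sqrt{\frac{3L}{\tau}}\,\|x-y\|,$$ where $C_2:=LC_1+2\max_{1\le j\le m}\|\nabla f_j(0)\|$.
   Context: $C(x)=\mathrm{conv}\{\nabla f_1(x),\dots,\nabla f_m(x)\}$, and $\mathrm{proj}_C(v)$ is the Euclidean projection of $v$ onto the closed convex set $C$. (In the paper this is applied to the iterates $x_k,y_k$ of a multiobjective accelerated proximal gradient method, which are bounded by a constant $C_1$.) *)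

theory Defs
  imports "HOL-Analysis.Analysis"
begin

end

theory Submission
  imports Defs
begin

lemma proj_diff:
  fixes A B :: "'a::euclidean_space set"
  assumes cA: "convex A" "closed A" and cB: "convex B" "closed B"
    and hA: "\<forall>a\<in>A. \<exists>b\<in>B. norm (a-b) \<le> \<delta>" and hB: "\<forall>b\<in>B. \<exists>a\<in>A. norm (b-a) \<le> \<delta>"
    and ne: "A \<noteq> {}" "B \<noteq> {}"
  shows "norm (closest_point B v - closest_point A v)^2
    \<le> \<delta> * (norm (v - closest_point B v) + norm (v - closest_point A v))"
proof -
  define p where "p = closest_point B v"
  define q where "q = closest_point A v"
  have pB: "p \<in> B" using closest_point_in_set[OF cB(2) ne(2)] p_def by simp
  have qA: "q \<in> A" using closest_point_in_set[OF cA(2) ne(1)] q_def by simp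
  obtain p' where p': "p' \<in> B" "norm (q - p') \<le> \<delta>" using hA qA by blast
  obtain q' where q': "q' \<in> A" "norm (p - q') \<le> \<delta>" using hB pB by blast
  have d1: "(v - p) \<bullet> (p' - p) \<le> 0" using closest_point_dot[OF cB p'(1)] p_def by simp
  have d2: "(v - q) \<bullet> (q' - q) \<le> 0" using closest_point_dot[OF cA q'(1)] q_def by simp
  have e1: "(v - p) \<bullet> (p' - p) = (v - p) \<bullet> (q - p) + (v - p) \<bullet> (p' - q)"
    by (simp add: inner_diff_right)
  have e2: "(v - q) \<bullet> (q' - q) = (v - q) \<bullet> (p - q) + (v - q) \<bullet> (q' - p)"
    by (simp add: inner_diff_right)
  have c1: "- ((v - p) \<bullet> (p' - q)) \<le> norm (v - p) * \<delta>"
  proof -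
    have "- ((v - p) \<bullet> (p' - q)) = (v - p) \<bullet> (q - p')" by (simp add: inner_diff_right)
    also have "\<dots> \<le> norm (v - p) * norm (q - p')" by (rule norm_cauchy_schwarz)
    also have "\<dots> \<le> norm (v - p) * \<delta>" using p'(2) by (simp add: mult_left_mono)
    finally show ?thesis .
  qed
  have c2: "- ((v - q) \<bullet> (q' - p)) \<le> norm (v - q) * \<delta>"
  proof -
    have "- ((v - q) \<bullet> (q' - p)) = (v - q) \<bullet> (p - q')" by (simp add: inner_diff_right)
    also have "\<dots> \<le> norm (v - q) * norm (p - q')" by (rule norm_cauchy_schwarz)
    also have "\<dots> \<le> norm (v - q) * \<delta>" using q'(2) by (simp add: mult_left_mono)
    finally show ?thesis .
  qed
  have sq: "norm (p - q)^2 = (v - p) \<bullet> (q - p) + (v - q) \<bullet> (p - q)"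
    by (simp add: power2_norm_eq_inner inner_diff_left inner_diff_right inner_commute algebra_simps)
  have "norm (p - q)^2 \<le> \<delta> * (norm (v - p) + norm (v - q))"
    using sq d1 d2 e1 e2 c1 c2 by (simp add: algebra_simps)
  then show ?thesis using p_def q_def by simp
qed

lemma hull_close:
  fixes g h :: "nat \<Rightarrow> 'a::euclidean_space"
  assumes "\<And>j. j \<in> I \<Longrightarrow> norm (g j - h j) \<le> \<delta>"
  shows "\<forall>b\<in>convex hull (g ` I). \<exists>a\<in>convex hull (h ` I). norm (b - a) \<le> \<delta>"
proof -
  define S where "S = (\<Union>a\<in>convex hull (h ` I). \<Union>e\<in>cball 0 \<delta>. {a + e})"
  have "convex S" unfolding S_def by (intro convex_sums convex_convex_hull convex_cball)
  moreover have "g ` I \<subseteq> S"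
  proof
    fix b assume "b \<in> g ` I"
    then obtain j where j: "j \<in> I" "b = g j" by auto
    have "h j \<in> convex hull (h ` I)" using j by (simp add: hull_inc)
    moreover have "g j - h j \<in> cball 0 \<delta>" using assms[OF j(1)] by (simp add: dist_norm norm_minus_commute)
    ultimately have "h j + (g j - h j) \<in> S" unfolding S_def by blast
    then show "b \<in> S" using j by simp
  qed
  ultimately have "convex hull (g ` I) \<subseteq> S" by (simp add: hull_minimal)
  then show ?thesis unfolding S_def by (force simp: dist_norm)
qed

lemma hull_norm:
  fixes g :: "nat \<Rightarrow> 'a::euclidean_space"
  assumes "\<And>j. j \<in> I \<Longrightarrow> norm (g j) \<le> R" "b \<in> convex hull (g ` I)"
  shows "norm b \<le> R"
proof -
  have "g ` I \<subseteq> cball 0 R" using assms(1) by auto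
  then have "convex hull (g ` I) \<subseteq> cball 0 R" by (simp add: hull_minimal convex_cball)
  then show ?thesis using assms(2) by auto
qed

theorem mainTheorem4:
  fixes f :: "nat \<Rightarrow> real ^ 'n \<Rightarrow> real"
    and grad :: "nat \<Rightarrow> real ^ 'n \<Rightarrow> real ^ 'n"
    and Lj :: "nat \<Rightarrow> real"
    and m :: nat and L C1 \<tau> :: real and x y :: "real ^ 'n"
  assumes m: "m \<ge> 1"
    and deriv: "\<And>j z. j \<in> {1..m} \<Longrightarrow> (f j has_derivative (\<lambda>h. grad j z \<bullet> h)) (at z)"
    and cont: "\<And>j. j \<in> {1..m} \<Longrightarrow> continuous_on UNIV (grad j)"
    and Lj_nonneg: "\<And>j. j \<in> {1..m} \<Longrightarrow> Lj j \<ge> 0"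
    and lip: "\<And>j u v. j \<in> {1..m} \<Longrightarrow> norm (grad j u - grad j v) \<le> Lj j * norm (u - v)"
    and L_def: "L = Max (Lj ` {1..m})"
    and C1: "C1 > 0" and tau: "\<tau> > 0"
    and xy: "norm x + norm y \<le> C1"
  shows "norm (closest_point (convex hull ((\<lambda>j. grad j y) ` {1..m})) ((y - x) /\<^sub>R \<tau>)
              - closest_point (convex hull ((\<lambda>j. grad j x) ` {1..m})) ((y - x) /\<^sub>R \<tau>))
         \<le> sqrt ((L * C1 + 2 * Max ((\<lambda>j. norm (grad j 0)) ` {1..m})) * L) * sqrt (norm (x - y))
            + sqrt (3 * L / \<tau>) * norm (x - y)"
proof -
  define A where "A = convex hull ((\<lambda>j. grad j x) ` {1..m})"
  define B where "B = convex hull ((\<lambda>j. grad j y) ` {1..m})"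
  define v where "v = (y - x) /\<^sub>R \<tau>"
  define d where "d = norm (x - y)"
  define G where "G = Max ((\<lambda>j. norm (grad j 0)) ` {1..m})"
  define p where "p = closest_point B v"
  define q where "q = closest_point A v"
  have ne: "{1..m} \<noteq> {}" using m by auto
  have LjL: "\<And>j. j \<in> {1..m} \<Longrightarrow> Lj j \<le> L" unfolding L_def by simp
  have L0: "L \<ge> 0" using LjL[of 1] Lj_nonneg[of 1] m by force
  have GG: "\<And>j. j \<in> {1..m} \<Longrightarrow> norm (grad j 0) \<le> G" unfolding G_def by simp
  have G0: "G \<ge> 0" using GG[of 1] m by (meson atLeastAtMost_iff le_refl norm_ge_zero order_trans)
  have d0: "d \<ge> 0" unfolding d_def by simp
  have close: "\<And>j. j \<in> {1..m} \<Longrightarrow> norm (grad j y - grad j x) \<le> L * d"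
  proof -
    fix j assume j: "j \<in> {1..m}"
    have "norm (grad j y - grad j x) \<le> Lj j * norm (y - x)" using lip[OF j] .
    also have "\<dots> \<le> L * d" unfolding d_def using LjL[OF j] by (simp add: norm_minus_commute mult_right_mono)
    finally show "norm (grad j y - grad j x) \<le> L * d" .
  qed
  have close2: "\<And>j. j \<in> {1..m} \<Longrightarrow> norm (grad j x - grad j y) \<le> L * d"
    using close by (simp add: norm_minus_commute)
  have bnd: "\<And>z j. j \<in> {1..m} \<Longrightarrow> norm (grad j z) \<le> G + L * norm z"
  proof -
    fix z j assume j: "j \<in> {1..m}"
    have "norm (grad j z) \<le> norm (grad j 0) + norm (grad j z - grad j 0)" by (metis norm_triangle_sub add.commute)
    also have "\<dots> \<le> G + Lj j * norm z" using GG[OF j] lip[OF j, of z 0] by simp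
    also have "\<dots> \<le> G + L * norm z" using LjL[OF j] by (simp add: mult_right_mono)
    finally show "norm (grad j z) \<le> G + L * norm z" .
  qed
  have cA: "convex A" "closed A" unfolding A_def
    by (auto intro: compact_imp_closed finite_imp_compact_convex_hull)
  have cB: "convex B" "closed B" unfolding B_def
    by (auto intro: compact_imp_closed finite_imp_compact_convex_hull)
  have neA: "A \<noteq> {}" "B \<noteq> {}" unfolding A_def B_def using ne by auto
  have hA: "\<forall>a\<in>A. \<exists>b\<in>B. norm (a-b) \<le> L * d" unfolding A_def B_def
    by (rule hull_close) (rule close2)
  have hB: "\<forall>b\<in>B. \<exists>a\<in>A. norm (b-a) \<le> L * d" unfolding A_def B_def
    by (rule hull_close) (rule close)
  have key: "norm (p - q)^2 \<le> L * d * (norm (v - p) + norm (v - q))"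
    using proj_diff[OF cA cB hA hB neA] p_def q_def by simp
  have pn: "norm p \<le> G + L * norm y"
    using hull_norm[of "{1..m}" "\<lambda>j. grad j y"] bnd closest_point_in_set[OF cB(2) neA(2)]
    unfolding p_def B_def by blast
  have qn: "norm q \<le> G + L * norm x"
    using hull_norm[of "{1..m}" "\<lambda>j. grad j x"] bnd closest_point_in_set[OF cA(2) neA(1)]
    unfolding q_def A_def by blast
  have vn: "norm v = d / \<tau>" unfolding v_def d_def using tau by (simp add: norm_minus_commute divide_inverse mult.commute)
  have "norm (v - p) + norm (v - q) \<le> 2 * (d / \<tau>) + 2 * G + L * (norm x + norm y)"
  proof -
    have "norm (v - p) \<le> norm v + norm p" by (rule norm_triangle_ineq4)
    moreover have "norm (v - q) \<le> norm v + norm q" by (rule norm_triangle_ineq4)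
    ultimately show ?thesis using pn qn vn by (simp only: distrib_left)
  qed
  also have "\<dots> \<le> 2 * (d / \<tau>) + 2 * G + L * C1" using xy L0 by (simp add: mult_left_mono)
  finally have s: "norm (v - p) + norm (v - q) \<le> 2 * (d / \<tau>) + (L * C1 + 2 * G)" by simp
  have LdO: "L * d \<ge> 0" using L0 d0 by simp
  have "norm (p - q)^2 \<le> L * d * (2 * (d / \<tau>) + (L * C1 + 2 * G))"
    using key mult_left_mono[OF s LdO] by linarith
  also have "\<dots> = (L * C1 + 2 * G) * L * d + 2 * L / \<tau> * d^2"
    by (simp add: algebra_simps power2_eq_square)
  also have "\<dots> \<le> (L * C1 + 2 * G) * L * d + 3 * L / \<tau> * d^2"
    using L0 tau by (intro add_left_mono mult_right_mono divide_right_mono) auto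
  finally have N2: "norm (p - q)^2 \<le> (L * C1 + 2 * G) * L * d + 3 * L / \<tau> * d^2" .
  have C20: "(L * C1 + 2 * G) * L * d \<ge> 0" using L0 G0 C1 d0 by simp
  have T0: "3 * L / \<tau> * d^2 \<ge> 0" using L0 tau by simp
  have "norm (p - q) \<le> sqrt ((L * C1 + 2 * G) * L * d + 3 * L / \<tau> * d^2)"
    using N2 real_le_rsqrt by blast
  also have "\<dots> \<le> sqrt ((L * C1 + 2 * G) * L * d) + sqrt (3 * L / \<tau> * d^2)"
    by (rule sqrt_add_le_add_sqrt[OF C20 T0])
  also have "\<dots> = sqrt ((L * C1 + 2 * G) * L) * sqrt d + sqrt (3 * L / \<tau>) * d"
  proof -
    have "sqrt (3 * L / \<tau> * d^2) = sqrt (3 * L / \<tau>) * d"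
      using d0 by (simp only: real_sqrt_mult real_sqrt_abs)
    moreover have "sqrt ((L * C1 + 2 * G) * L * d) = sqrt ((L * C1 + 2 * G) * L) * sqrt d"
      by (simp add: real_sqrt_mult)
    ultimately show ?thesis by simp
  qed
  finally show ?thesis unfolding p_def q_def A_def B_def v_def d_def G_def .
qed

end
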